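(* Let $\Phi$ be a Young function, $Q\subset\mathbb{R}^N$ bounded open and $\{T(x)\}$ an $N$-dimensional dynamical system on $(\Omega,\mathscr{M},\mu)$. Then every $f\in\mathcal{C}(\overline{Q},L^\infty(\Omega))$ is admissible.
   Context: Young function: $\Phi:[0,\infty)\to[0,\infty)$ continuous, convex, $\Phi(t)>0$ for $t>0$, $\Phi(t)/t\to0$ at $0$, $\to\infty$ at $\infty$. $N$-dimensional dynamical system: invertible bimeasurable maps $T(x)$ of the probability space $(\Omega,\mathscr{M},\mu)$, $T(0)=\mathrm{id}$, $T(x_1+x_2)=T(x_1)\circ T(x_2)$, $\mu$-preserving, jointly measurable in $(x,\omega)$. $\mathcal{C}(\overline{Q},L^\infty(\Omega))$ is the space of continuous maps $\overline Q\to L^\infty(\Omega)$. An element $f\in L^\Phi(Q\times\Omega)$ is admissible if $f_T:(x,\omega)\mapsto f(x,T(x)\omega)$ defines an element of $L^\Phi(Q\times\Omega)$. *)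

theory Defs
  imports "HOL-Probability.Probability"
begin

definition young_function :: "(real \<Rightarrow> real) \<Rightarrow> bool" where
  "young_function \<Phi> \<longleftrightarrow>
     continuous_on {0..} \<Phi> \<and> convex_on {0..} \<Phi> \<and>
     (\<forall>t\<ge>0. \<Phi> t \<ge> 0) \<and> (\<forall>t>0. \<Phi> t > 0) \<and>
     ((\<lambda>t. \<Phi> t / t) \<longlongrightarrow> 0) (at_right 0) \<and>
     filterlim (\<lambda>t. \<Phi> t / t) at_top at_top"

text \<open>N-dimensional dynamical system on the probability space M (N = DIM('a)).\<close>
definition dynamical_system :: "'w measure \<Rightarrow> ('a::euclidean_space \<Rightarrow> 'w \<Rightarrow> 'w) \<Rightarrow> bool" where
  "dynamical_system M T \<longleftrightarrow>
     prob_space M \<and>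
     (\<forall>x. bij_betw (T x) (space M) (space M) \<and>
          T x \<in> M \<rightarrow>\<^sub>M M \<and> distr M M (T x) = M \<and>
          the_inv_into (space M) (T x) \<in> M \<rightarrow>\<^sub>M M) \<and>
     (\<forall>\<omega>\<in>space M. T 0 \<omega> = \<omega>) \<and>
     (\<forall>x1 x2. \<forall>\<omega>\<in>space M. T (x1 + x2) \<omega> = T x1 (T x2 \<omega>)) \<and>
     (\<lambda>(x, \<omega>). T x \<omega>) \<in> (lebesgue \<Otimes>\<^sub>M M) \<rightarrow>\<^sub>M M"

text \<open>Orlicz space L^Phi(N) (as a set of representatives).\<close>
definition orlicz_space :: "(real \<Rightarrow> real) \<Rightarrow> 'b measure \<Rightarrow> ('b \<Rightarrow> real) set" where
  "orlicz_space \<Phi> N = {u \<in> borel_measurable N.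
      \<exists>\<delta>>0. (\<integral>\<^sup>+ z. ennreal (\<Phi> (\<bar>u z\<bar> / \<delta>)) \<partial>N) < \<infinity>}"

text \<open>f (given by its slices f x, each a representative of an element of L^infty(Omega))
  is a continuous map from K to L^infty(Omega).\<close>
definition C_Linf :: "'a::metric_space set \<Rightarrow> 'w measure \<Rightarrow> ('a \<Rightarrow> 'w \<Rightarrow> real) \<Rightarrow> bool" where
  "C_Linf K M f \<longleftrightarrow>
     (\<forall>x\<in>K. f x \<in> borel_measurable M \<and> esssup M (\<lambda>\<omega>. ereal \<bar>f x \<omega>\<bar>) < \<infinity>) \<and>
     (\<forall>x\<in>K. \<forall>\<epsilon>>0. \<exists>\<delta>>0. \<forall>y\<in>K. dist y x < \<delta> \<longrightarrow>
         esssup M (\<lambda>\<omega>. ereal \<bar>f y \<omega> - f x \<omega>\<bar>) < ereal \<epsilon>)"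

definition defines_orlicz ::
  "(real \<Rightarrow> real) \<Rightarrow> 'a::euclidean_space set \<Rightarrow> 'w measure \<Rightarrow> ('a \<Rightarrow> 'w \<Rightarrow> real) \<Rightarrow> bool" where
  "defines_orlicz \<Phi> Q M g \<longleftrightarrow>
     (\<exists>u \<in> orlicz_space \<Phi> (lebesgue_on Q \<Otimes>\<^sub>M M).
        \<forall>x\<in>Q. AE \<omega> in M. u (x, \<omega>) = g x \<omega>)"

definition admissible ::
  "(real \<Rightarrow> real) \<Rightarrow> 'a::euclidean_space set \<Rightarrow> 'w measure \<Rightarrow> ('a \<Rightarrow> 'w \<Rightarrow> 'w)
     \<Rightarrow> ('a \<Rightarrow> 'w \<Rightarrow> real) \<Rightarrow> bool" where
  "admissible \<Phi> Q M T f \<longleftrightarrow>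
     defines_orlicz \<Phi> Q M f \<and> defines_orlicz \<Phi> Q M (\<lambda>x \<omega>. f x (T x \<omega>))"

end

theory Submission imports Defs begin

lemma young_bdd:
  assumes "young_function \<Phi>"
  obtains C where "\<And>t. 0 \<le> t \<Longrightarrow> t \<le> 1 \<Longrightarrow> \<Phi> t \<le> C"
proof -
  have "continuous_on {0..1} \<Phi>" using assms unfolding young_function_def
    by (meson atLeastAtMost_iff atLeast_iff continuous_on_subset subsetI)
  then have "compact (\<Phi> ` {0..1})" by (rule compact_continuous_image) simp
  then obtain C where "\<forall>y\<in>\<Phi> ` {0..1}. y \<le> C"
    using compact_imp_bounded bounded_real by (metis abs_le_D1)
  then show ?thesis using that by force
qed

lemma bounded_orlicz:
  assumes Y: "young_function \<Phi>" and Qb: "bounded Q" and Qo: "open Q"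
    and P: "prob_space M"
    and w: "w \<in> borel_measurable (lebesgue_on Q \<Otimes>\<^sub>M M)"
    and B: "\<And>z. \<bar>w z\<bar> \<le> B"
  shows "w \<in> orlicz_space \<Phi> (lebesgue_on Q \<Otimes>\<^sub>M M)"
proof -
  obtain C where C: "\<And>t. 0 \<le> t \<Longrightarrow> t \<le> 1 \<Longrightarrow> \<Phi> t \<le> C" using young_bdd[OF Y] by blast
  interpret prob_space M by (rule P)
  have Ql: "Q \<in> lmeasurable" using lmeasurable_open[OF Qb Qo] .
  have Qs: "Q \<in> sets lebesgue" using Ql by (simp add: fmeasurable_def)
  have "emeasure (lebesgue_on Q) Q = emeasure lebesgue Q"
    using Qs by (simp add: emeasure_restrict_space)
  also have "\<dots> < \<infinity>" using fmeasurableD2[OF Ql] by (metis infinity_ennreal_def less_top)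
  finally have fin: "emeasure (lebesgue_on Q) Q < \<infinity>" .
  have sp: "space (lebesgue_on Q \<Otimes>\<^sub>M M) = Q \<times> space M"
    by (simp add: space_pair_measure)
  have "emeasure (lebesgue_on Q \<Otimes>\<^sub>M M) (Q \<times> space M) = emeasure (lebesgue_on Q) Q * emeasure M (space M)"
    by (rule emeasure_pair_measure_Times) (auto simp: Qs sets_restrict_space_iff)
  also have "\<dots> < \<infinity>" using fin by (simp add: emeasure_space_1)
  finally have fin2: "emeasure (lebesgue_on Q \<Otimes>\<^sub>M M) (space (lebesgue_on Q \<Otimes>\<^sub>M M)) < \<infinity>"
    using sp by simp
  define d where "d = \<bar>B\<bar> + 1"
  have d: "d > 0" by (simp add: d_def)
  have "(\<integral>\<^sup>+ z. ennreal (\<Phi> (\<bar>w z\<bar> / d)) \<partial>(lebesgue_on Q \<Otimes>\<^sub>M M))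
       \<le> (\<integral>\<^sup>+ z. ennreal C \<partial>(lebesgue_on Q \<Otimes>\<^sub>M M))"
  proof (rule nn_integral_mono)
    fix z
    have "\<bar>w z\<bar> / d \<le> 1" using B[of z] d by (simp add: d_def)
    then show "ennreal (\<Phi> (\<bar>w z\<bar> / d)) \<le> ennreal C"
      using C[of "\<bar>w z\<bar> / d"] d by (intro ennreal_leI) auto
  qed
  also have "\<dots> = ennreal C * emeasure (lebesgue_on Q \<Otimes>\<^sub>M M) (space (lebesgue_on Q \<Otimes>\<^sub>M M))"
    by simp
  also have "\<dots> < \<infinity>" using fin2 by (simp add: ennreal_mult_less_top)
  finally show ?thesis unfolding orlicz_space_def using w d by blast
qed

lemma open_lebesgue: "open U \<Longrightarrow> U \<in> sets lebesgue"
  by (metis borel_open sets_completionI_sets sets_lborel)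

lemma approx:
  assumes C: "C_Linf K M f" and K: "compact K" and QK: "Q \<subseteq> K" and Qs: "Q \<in> sets lebesgue"
    and e: "e > 0"
  obtains g C where "g \<in> borel_measurable (lebesgue_on Q \<Otimes>\<^sub>M M)" "finite C" "C \<subseteq> K"
    "\<And>x. x \<in> Q \<Longrightarrow> \<exists>c\<in>C. (\<forall>\<omega>. g (x,\<omega>) = f c \<omega>) \<and> esssup M (\<lambda>\<omega>. ereal \<bar>f x \<omega> - f c \<omega>\<bar>) < ereal e"
proof -
  have ex: "\<exists>\<delta>>0. \<forall>y\<in>K. dist y c < \<delta> \<longrightarrow> esssup M (\<lambda>\<omega>. ereal \<bar>f y \<omega> - f c \<omega>\<bar>) < ereal e"
    if "c \<in> K" for c using C that e unfolding C_Linf_def by blast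
  define r where "r c = (SOME \<delta>. \<delta> > 0 \<and> (\<forall>y\<in>K. dist y c < \<delta> \<longrightarrow> esssup M (\<lambda>\<omega>. ereal \<bar>f y \<omega> - f c \<omega>\<bar>) < ereal e))" for c
  have r: "r c > 0 \<and> (\<forall>y\<in>K. dist y c < r c \<longrightarrow> esssup M (\<lambda>\<omega>. ereal \<bar>f y \<omega> - f c \<omega>\<bar>) < ereal e)"
    if "c \<in> K" for c
    unfolding r_def by (rule someI_ex) (rule ex[OF that])
  have "K \<subseteq> (\<Union>c\<in>K. ball c (r c))" using r by fastforce
  then obtain C where CK: "C \<subseteq> K" and fC: "finite C" and cov: "K \<subseteq> (\<Union>c\<in>C. ball c (r c))"
    using compactE_image[OF K, of K "\<lambda>c. ball c (r c)"] by blast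
  obtain cs where cs: "set cs = C" using finite_list[OF fC] by blast
  define B where "B i = ball (cs ! i) (r (cs ! i))" for i
  define idx where "idx x = (LEAST i. i < length cs \<and> x \<in> B i)" for x
  have exi: "\<exists>i. i < length cs \<and> x \<in> B i" if "x \<in> Q" for x
  proof -
    from cov QK that obtain c where "c \<in> C" "x \<in> ball c (r c)" by blast
    then obtain i where "i < length cs" "cs ! i = c" using cs by (auto simp: in_set_conv_nth)
    then show ?thesis using \<open>x \<in> ball c (r c)\<close> by (auto simp: B_def)
  qed
  have idx1: "idx x < length cs \<and> x \<in> B (idx x)" if "x \<in> Q" for x
    unfolding idx_def using LeastI_ex[OF exi[OF that]] .
  have idx_eq: "idx x = a \<longleftrightarrow> a < length cs \<and> x \<in> B a \<and> (\<forall>j<a. x \<notin> B j)" if "x \<in> Q" for x a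
  proof
    assume "idx x = a"
    then show "a < length cs \<and> x \<in> B a \<and> (\<forall>j<a. x \<notin> B j)"
      using idx1[OF that] not_less_Least[of _ "\<lambda>i. i < length cs \<and> x \<in> B i"]
      unfolding idx_def by (metis order.strict_trans)
  next
    assume "a < length cs \<and> x \<in> B a \<and> (\<forall>j<a. x \<notin> B j)"
    then show "idx x = a" unfolding idx_def by (intro Least_equality) (auto simp: not_less[symmetric])
  qed
  define g where "g z = f (cs ! idx (fst z)) (snd z)" for z
  have "idx \<in> lebesgue_on Q \<rightarrow>\<^sub>M count_space {..<length cs}"
  proof (subst measurable_count_space_eq2_countable, intro conjI ballI)
    show "idx \<in> space (lebesgue_on Q) \<rightarrow> {..<length cs}" using idx1 by auto
    fix a assume "a \<in> {..<length cs}"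
    have eq: "idx -` {a} \<inter> space (lebesgue_on Q) = Q \<inter> (B a - (\<Union>j<a. B j))"
      using idx_eq \<open>a \<in> {..<length cs}\<close> by auto
    have "B a - (\<Union>j<a. B j) \<in> sets lebesgue"
      by (intro sets.Diff sets.finite_UN open_lebesgue) (auto simp: B_def)
    then show "idx -` {a} \<inter> space (lebesgue_on Q) \<in> sets (lebesgue_on Q)"
      unfolding eq using Qs by (subst sets_restrict_space_iff) auto
  qed
  then have mi: "(\<lambda>z. idx (fst z)) \<in> (lebesgue_on Q \<Otimes>\<^sub>M M) \<rightarrow>\<^sub>M count_space {..<length cs}"
    by (rule measurable_compose[OF measurable_fst])
  have "g \<in> borel_measurable (lebesgue_on Q \<Otimes>\<^sub>M M)"
    unfolding g_def
  proof (rule measurable_compose_countable'[OF _ mi])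
    fix i assume "i \<in> {..<length cs}"
    then have "cs ! i \<in> K" using cs CK by auto
    then have "f (cs ! i) \<in> borel_measurable M" using C unfolding C_Linf_def by blast
    then show "(\<lambda>z. f (cs ! i) (snd z)) \<in> borel_measurable (lebesgue_on Q \<Otimes>\<^sub>M M)"
      by (rule measurable_compose[OF measurable_snd])
  qed auto
  moreover have "\<exists>c\<in>C. (\<forall>\<omega>. g (x,\<omega>) = f c \<omega>) \<and> esssup M (\<lambda>\<omega>. ereal \<bar>f x \<omega> - f c \<omega>\<bar>) < ereal e"
    if "x \<in> Q" for x
  proof (intro bexI conjI allI)
    let ?c = "cs ! idx x"
    show "?c \<in> C" using idx1[OF that] cs by auto
    then have "?c \<in> K" using CK by auto
    moreover have "dist x ?c < r ?c" using idx1[OF that] by (auto simp: B_def dist_commute)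
    ultimately show "esssup M (\<lambda>\<omega>. ereal \<bar>f x \<omega> - f ?c \<omega>\<bar>) < ereal e"
      using r[of ?c] QK that by blast
  qed (simp add: g_def)
  ultimately show ?thesis using that fC CK by blast
qed

lemma lim_close:
  fixes a :: "nat \<Rightarrow> real"
  assumes "\<And>n. \<bar>a n - l\<bar> \<le> 1 / real (Suc n)"
  shows "a \<longlonglongrightarrow> l"
proof -
  have "(\<lambda>n. a n - l) \<longlonglongrightarrow> 0"
    by (rule Lim_null_comparison[OF _ LIMSEQ_inverse_real_of_nat])
       (use assms in \<open>auto simp: divide_inverse\<close>)
  then show ?thesis by (rule LIM_zero_cancel)
qed

lemma esssup_less_AE:
  assumes "esssup M (\<lambda>\<omega>. ereal (h \<omega>)) < ereal e"
  shows "AE \<omega> in M. h \<omega> \<le> e"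
  using esssup_AE[of "\<lambda>\<omega>. ereal (h \<omega>)" M]
proof (elim eventually_mono)
  fix \<omega> assume "ereal (h \<omega>) \<le> esssup M (\<lambda>\<omega>. ereal (h \<omega>))"
  then have "ereal (h \<omega>) < ereal e" using assms by (rule le_less_trans)
  then show "h \<omega> \<le> e" by simp
qed

lemma esssup_fin_AE:
  assumes "esssup M (\<lambda>\<omega>. ereal (h \<omega>)) < \<infinity>"
  shows "AE \<omega> in M. h \<omega> \<le> real_of_ereal (esssup M (\<lambda>\<omega>. ereal (h \<omega>)))"
  using esssup_AE[of "\<lambda>\<omega>. ereal (h \<omega>)" M] assms
proof (elim eventually_mono)
  fix \<omega> assume "ereal (h \<omega>) \<le> esssup M (\<lambda>\<omega>. ereal (h \<omega>))"
  with assms show "h \<omega> \<le> real_of_ereal (esssup M (\<lambda>\<omega>. ereal (h \<omega>)))"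
    by (cases "esssup M (\<lambda>\<omega>. ereal (h \<omega>))") auto
qed

theorem mainTheorem6:
  fixes \<Phi> :: "real \<Rightarrow> real"
    and Q :: "'a::euclidean_space set"
    and M :: "'w measure"
    and T :: "'a \<Rightarrow> 'w \<Rightarrow> 'w"
    and f :: "'a \<Rightarrow> 'w \<Rightarrow> real"
  assumes "young_function \<Phi>"
    and "open Q" and "bounded Q"
    and "dynamical_system M T"
    and "C_Linf (closure Q) M f"
  shows "admissible \<Phi> Q M T f"
proof -
  note Y = assms(1) and Qo = assms(2) and Qb = assms(3) and DS = assms(4) and CL = assms(5)
  define K where "K = closure Q"
  have K: "compact K" unfolding K_def using Qb by (simp add: compact_closure)
  have QK: "Q \<subseteq> K" unfolding K_def by (rule closure_subset)
  have Qs: "Q \<in> sets lebesgue" using Qo by (rule open_lebesgue)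
  have P: "prob_space M" using DS unfolding dynamical_system_def by blast
  have CLK: "C_Linf K M f" using CL by (simp add: K_def)
  have "\<forall>n. \<exists>g. g \<in> borel_measurable (lebesgue_on Q \<Otimes>\<^sub>M M) \<and>
      (\<forall>x\<in>Q. AE \<omega> in M. \<bar>g (x,\<omega>) - f x \<omega>\<bar> \<le> 1 / real (Suc n))"
  proof
    fix n
    have e: "(0::real) < 1 / real (Suc n)" by simp
    obtain g C where g: "g \<in> borel_measurable (lebesgue_on Q \<Otimes>\<^sub>M M)"
      and "finite C" "C \<subseteq> K" and gC: "\<And>x. x \<in> Q \<Longrightarrow> \<exists>c\<in>C. (\<forall>\<omega>. g (x,\<omega>) = f c \<omega>) \<and> esssup M (\<lambda>\<omega>. ereal \<bar>f x \<omega> - f c \<omega>\<bar>) < ereal (1 / real (Suc n))"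
      by (rule approx[OF CLK K QK Qs e]) blast
    have "AE \<omega> in M. \<bar>g (x,\<omega>) - f x \<omega>\<bar> \<le> 1 / real (Suc n)" if "x \<in> Q" for x
    proof -
      from gC[OF that] obtain c where c: "\<forall>\<omega>. g (x,\<omega>) = f c \<omega>"
        "esssup M (\<lambda>\<omega>. ereal \<bar>f x \<omega> - f c \<omega>\<bar>) < ereal (1 / real (Suc n))" by blast
      from esssup_less_AE[OF c(2)] show ?thesis
        by (elim eventually_mono) (metis c(1) abs_minus_commute)
    qed
    then show "\<exists>g. g \<in> borel_measurable (lebesgue_on Q \<Otimes>\<^sub>M M) \<and>
      (\<forall>x\<in>Q. AE \<omega> in M. \<bar>g (x,\<omega>) - f x \<omega>\<bar> \<le> 1 / real (Suc n))" using g by blast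
  qed
  from choice[OF this] obtain G where G: "\<forall>n. G n \<in> borel_measurable (lebesgue_on Q \<Otimes>\<^sub>M M) \<and>
      (\<forall>x\<in>Q. AE \<omega> in M. \<bar>G n (x,\<omega>) - f x \<omega>\<bar> \<le> 1 / real (Suc n))" ..
  have Gm: "\<And>n. G n \<in> borel_measurable (lebesgue_on Q \<Otimes>\<^sub>M M)" using G by blast
  have GA: "\<And>n x. x \<in> Q \<Longrightarrow> AE \<omega> in M. \<bar>G n (x,\<omega>) - f x \<omega>\<bar> \<le> 1 / real (Suc n)"
    using G by blast
  obtain g0 C0 where "g0 \<in> borel_measurable (lebesgue_on Q \<Otimes>\<^sub>M M)" and fC0: "finite C0" and C0K: "C0 \<subseteq> K"
    and g0C: "\<And>x. x \<in> Q \<Longrightarrow> \<exists>c\<in>C0. (\<forall>\<omega>. g0 (x,\<omega>) = f c \<omega>) \<and> esssup M (\<lambda>\<omega>. ereal \<bar>f x \<omega> - f c \<omega>\<bar>) < ereal 1"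
    by (rule approx[OF CLK K QK Qs zero_less_one]) blast
  define Bc where "Bc c = real_of_ereal (esssup M (\<lambda>\<omega>. ereal \<bar>f c \<omega>\<bar>))" for c
  define B where "B = 1 + (\<Sum>c\<in>C0. max 0 (Bc c))"
  have B0: "B \<ge> 0" unfolding B_def by (simp add: sum_nonneg)
  have fB: "AE \<omega> in M. \<bar>f x \<omega>\<bar> \<le> B" if "x \<in> Q" for x
  proof -
    from g0C[OF that] obtain c where c: "c \<in> C0"
      "esssup M (\<lambda>\<omega>. ereal \<bar>f x \<omega> - f c \<omega>\<bar>) < ereal 1" by blast
    have "esssup M (\<lambda>\<omega>. ereal \<bar>f c \<omega>\<bar>) < \<infinity>" using CLK c(1) C0K unfolding C_Linf_def by blast
    from esssup_fin_AE[OF this] esssup_less_AE[OF c(2)]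
    have "AE \<omega> in M. \<bar>f c \<omega>\<bar> \<le> Bc c \<and> \<bar>f x \<omega> - f c \<omega>\<bar> \<le> 1"
      unfolding Bc_def by eventually_elim auto
    moreover have "max 0 (Bc c) \<le> (\<Sum>c\<in>C0. max 0 (Bc c))"
      using fC0 c(1) by (intro member_le_sum) auto
    ultimately show ?thesis by (elim eventually_mono) (auto simp: B_def)
  qed
  define u where "u z = max (- B) (min B (lim (\<lambda>n. G n z)))" for z
  have um: "u \<in> borel_measurable (lebesgue_on Q \<Otimes>\<^sub>M M)"
    unfolding u_def
    by (intro borel_measurable_max borel_measurable_min borel_measurable_const borel_measurable_uminus borel_measurable_lim_metric Gm)
  have uB: "\<bar>u z\<bar> \<le> B" for z using B0 unfolding u_def by auto
  have uf: "AE \<omega> in M. u (x,\<omega>) = f x \<omega>" if "x \<in> Q" for x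
  proof -
    have "AE \<omega> in M. (\<forall>n. \<bar>G n (x,\<omega>) - f x \<omega>\<bar> \<le> 1 / real (Suc n)) \<and> \<bar>f x \<omega>\<bar> \<le> B"
      using GA[OF that] fB[OF that] by (simp add: AE_all_countable)
    then show ?thesis
    proof (elim eventually_mono, elim conjE)
      fix \<omega> assume a: "\<forall>n. \<bar>G n (x,\<omega>) - f x \<omega>\<bar> \<le> 1 / real (Suc n)" and b: "\<bar>f x \<omega>\<bar> \<le> B"
      have "(\<lambda>n. G n (x,\<omega>)) \<longlonglongrightarrow> f x \<omega>" using a by (intro lim_close) auto
      then have "lim (\<lambda>n. G n (x,\<omega>)) = f x \<omega>" by (rule limI)
      then show "u (x,\<omega>) = f x \<omega>" using b unfolding u_def by auto
    qed
  qed
  have D1: "defines_orlicz \<Phi> Q M f"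
    unfolding defines_orlicz_def
    using bounded_orlicz[OF Y Qb Qo P um uB] uf by blast
  define v where "v z = u (fst z, T (fst z) (snd z))" for z
  have Tm: "(\<lambda>(x, \<omega>). T x \<omega>) \<in> (lebesgue \<Otimes>\<^sub>M M) \<rightarrow>\<^sub>M M"
    using DS unfolding dynamical_system_def by blast
  have fstm: "fst \<in> (lebesgue_on Q \<Otimes>\<^sub>M M) \<rightarrow>\<^sub>M lebesgue"
  proof -
    have "id \<in> lebesgue_on Q \<rightarrow>\<^sub>M lebesgue" by (intro measurable_restrict_space1 measurable_ident)
    from measurable_compose[OF measurable_fst this] show ?thesis by simp
  qed
  have "(\<lambda>z. (fst z, snd z)) \<in> (lebesgue_on Q \<Otimes>\<^sub>M M) \<rightarrow>\<^sub>M (lebesgue \<Otimes>\<^sub>M M)"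
    by (rule measurable_Pair[OF fstm measurable_snd])
  from measurable_compose[OF this Tm]
  have Tm2: "(\<lambda>z. T (fst z) (snd z)) \<in> (lebesgue_on Q \<Otimes>\<^sub>M M) \<rightarrow>\<^sub>M M" by simp
  have "(\<lambda>z. (fst z, T (fst z) (snd z))) \<in> (lebesgue_on Q \<Otimes>\<^sub>M M) \<rightarrow>\<^sub>M (lebesgue_on Q \<Otimes>\<^sub>M M)"
    by (rule measurable_Pair[OF measurable_fst Tm2])
  from measurable_compose[OF this um]
  have vm: "v \<in> borel_measurable (lebesgue_on Q \<Otimes>\<^sub>M M)" unfolding v_def .
  have vB: "\<bar>v z\<bar> \<le> B" for z unfolding v_def by (rule uB)
  have vf: "AE \<omega> in M. v (x,\<omega>) = f x (T x \<omega>)" if "x \<in> Q" for x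
  proof -
    have Tx: "T x \<in> M \<rightarrow>\<^sub>M M" and dT: "distr M M (T x) = M"
      using DS unfolding dynamical_system_def by blast+
    have "AE \<omega> in distr M M (T x). u (x,\<omega>) = f x \<omega>" by (subst dT) (rule uf[OF that])
    from AE_distrD[OF Tx this] show ?thesis by (simp add: v_def)
  qed
  have D2: "defines_orlicz \<Phi> Q M (\<lambda>x \<omega>. f x (T x \<omega>))"
    unfolding defines_orlicz_def
    using bounded_orlicz[OF Y Qb Qo P vm vB] vf by blast
  show ?thesis unfolding admissible_def using D1 D2 by blast
qed

end
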